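(* Let $a>0$, $b>0$, $c>0$ and consider the equation $u_t+ax^2u_{xx}+bx^3u_{xx}^2+cxu_x-cu=0$ for $t>0$, $x>0$. Let $c_1,c_2$ be arbitrary real constants and $\varepsilon,\delta\in\{1,-1\}$. Each of the following functions is an exact solution: (1) $u=c_1e^{ct}+\frac{a}{2b}x\left(c_2+\frac{a+2c}{2}t-\log x\right)$; (2) $u=(c_1-ct)e^{ct}+4\delta e^{\frac c2t}\sqrt{\frac{cx}{b}}+\frac{a}{2b}x\left(c_2+\frac{a+2c}{2}t-\log x\right)$; (3) $u=c_1e^{ct}+\frac{a+2\varepsilon c}{2b}x\left(c_2+\frac{a+2(1-\varepsilon)c}{2}t-\log x\right)$; (4) $u=\varepsilon c_1^2e^{(1-\varepsilon)ct}+4\delta c_1e^{\frac c2(1-\varepsilon)t}\sqrt{\frac{cx}{b}}+\frac{a+2\varepsilon c}{2b}x\left(c_2+\frac{a+2(1-\varepsilon)c}{2}t-\log x\right)$; (5) $u=\frac{cx}{b}\left\{c_1+\left[\varepsilon c+\frac a2\left(1+\frac{a}{2c}\right)\right]t-\frac{a}{2c}\log x+\frac{1}{2k}\left(\delta\sqrt{1-4\varepsilon k^2}-1\right)\left[\left(\frac1k-1\right)ct+\log x\right]\right\}$, where $k\neq0$ if $\varepsilon=-1$, and $0<|k|\le\frac12$ if $\varepsilon=1$.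
   Context: $\log$ denotes the natural logarithm. *)

theory Defs
  imports Complex_Main
begin

definition solves_eq :: "real \<Rightarrow> real \<Rightarrow> real \<Rightarrow> (real \<Rightarrow> real \<Rightarrow> real) \<Rightarrow> bool" where
  "solves_eq a b c u \<longleftrightarrow>
     (\<exists>ut ux uxx. \<forall>t>0. \<forall>x>0.
        ((\<lambda>s. u s x) has_real_derivative ut t x) (at t) \<and>
        ((\<lambda>y. u t y) has_real_derivative ux t x) (at x) \<and>
        ((\<lambda>y. ux t y) has_real_derivative uxx t x) (at x) \<and>
        ut t x + a * x^2 * uxx t x + b * x^3 * (uxx t x)^2 + c * x * ux t x - c * u t x = 0)"

end

theory Submission
  imports Defs
begin

lemma dS: assumes "x>0" "c>0" "b>0"
  shows "((\<lambda>y. sqrt(c*y/b)) has_real_derivative sqrt(c*x/b)/(2*x)) (at x)"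
proof -
  have p: "c*x/b > 0" using assms by simp
  have "((\<lambda>y. sqrt(c*y/b)) has_real_derivative inverse (sqrt (c*x/b)) / 2 * (c/b)) (at x)"
    using p by (auto intro!: derivative_eq_intros)
  moreover have "inverse (sqrt (c*x/b)) / 2 * (c/b) = sqrt(c*x/b)/(2*x)"
  proof -
    have s: "sqrt(c*x/b) * sqrt(c*x/b) = c*x/b" using p by (simp only: real_sqrt_mult_self abs_of_pos[OF p])
    have "sqrt(c*x/b) > 0" using p by simp
    then show ?thesis using s assms by (simp add: field_simps)
  qed
  ultimately show ?thesis by simp
qed
lemma dS2: assumes "x>0" "c>0" "b>0"
  shows "((\<lambda>y. sqrt(c*y/b)/(2*y)) has_real_derivative - sqrt(c*x/b)/(4*x^2)) (at x)"
proof -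
  have d2: "((\<lambda>y. 2*y) has_real_derivative 2) (at x)" by (auto intro!: derivative_eq_intros)
  have "((\<lambda>y. sqrt(c*y/b)/(2*y)) has_real_derivative (sqrt(c*x/b)/(2*x) * (2*x) - sqrt(c*x/b)*2)/((2*x)*(2*x))) (at x)"
    using DERIV_divide[OF dS[OF assms] d2] assms by simp
  then show ?thesis using assms by (simp add: field_simps power2_eq_square)
qed

lemma gen:
  assumes abc: "b>0" "c>0"
    and u: "\<And>t x. x>0 \<Longrightarrow> u t x = F t + G t * sqrt(c*x/b) + x*(K t - A*ln x)"
    and dF: "\<And>t. (F has_real_derivative F' t) (at t)"
    and dG: "\<And>t. (G has_real_derivative G' t) (at t)"
    and dK: "\<And>t. (K has_real_derivative K' t) (at t)"
    and e1: "\<And>t. t>0 \<Longrightarrow> F' t + c*(G t)^2/16 - c*F t = 0"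
    and e2: "\<And>t. t>0 \<Longrightarrow> G' t - a*G t/4 + b*A*G t/2 - c*G t/2 = 0"
    and e3: "\<And>t. t>0 \<Longrightarrow> K' t - a*A + b*A^2 - c*A = 0"
  shows "solves_eq a b c u"
  unfolding solves_eq_def
proof (intro exI allI impI conjI)
  fix t x :: real assume t: "t>0" and x: "x>0"
  have ue: "(\<lambda>s. u s x) = (\<lambda>s. F s + G s * sqrt(c*x/b) + x*(K s - A*ln x))" using u x by auto
  show "((\<lambda>s. u s x) has_real_derivative F' t + G' t * sqrt(c*x/b) + x*K' t) (at t)"
    unfolding ue by (auto intro!: derivative_eq_intros dF dG dK)
  have evn: "eventually (\<lambda>y. u t y = F t + G t * sqrt(c*y/b) + y*(K t - A*ln y)) (nhds x)"
    using eventually_nhds_in_open[of "{0<..}" x] x u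
    by (auto elim!: eventually_mono)
  then have ev: "eventually (\<lambda>y. u t y = F t + G t * sqrt(c*y/b) + y*(K t - A*ln y)) (at x)"
    by (simp add: eventually_at_filter eventually_mono)
  have "((\<lambda>y. F t + G t * sqrt(c*y/b) + y*(K t - A*ln y)) has_real_derivative
        G t * (sqrt(c*x/b)/(2*x)) + (K t - A*ln x - A)) (at x)"
  proof -
    have d1: "((\<lambda>y. G t * sqrt(c*y/b)) has_real_derivative G t * (sqrt(c*x/b)/(2*x))) (at x)"
      using DERIV_cmult[OF dS[OF x abc(2) abc(1)], of "G t"] by simp
    have d2: "((\<lambda>y. y*(K t - A*ln y)) has_real_derivative (K t - A*ln x - A)) (at x)"
      using x by (auto intro!: derivative_eq_intros simp: field_simps)
    show ?thesis using DERIV_add[OF DERIV_add[OF DERIV_const[of "F t"] d1] d2] by simp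
  qed
  then show "((\<lambda>y. u t y) has_real_derivative G t * (sqrt(c*x/b)/(2*x)) + (K t - A*ln x - A)) (at x)"
    using DERIV_cong_ev[OF refl evn refl] u[OF x] by simp
  show "((\<lambda>y. G t * (sqrt(c*y/b)/(2*y)) + (K t - A*ln y - A)) has_real_derivative
        G t * (- sqrt(c*x/b)/(4*x^2)) - A/x) (at x)"
  proof -
    have d1: "((\<lambda>y. G t * (sqrt(c*y/b)/(2*y))) has_real_derivative G t * (- sqrt(c*x/b)/(4*x^2))) (at x)"
      using DERIV_cmult[OF dS2[OF x abc(2) abc(1)], of "G t"] by simp
    have d2: "((\<lambda>y. K t - A*ln y - A) has_real_derivative - A/x) (at x)"
      using x by (auto intro!: derivative_eq_intros simp: field_simps)
    have e: "G t * (- sqrt(c*x/b)/(4*x^2)) + - A/x = G t * (- sqrt(c*x/b)/(4*x^2)) - A/x" by simp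
    show ?thesis using DERIV_add[OF d1 d2] unfolding e by (simp add: add_diff_eq)
  qed
  have s: "sqrt(c*x/b)^2 = c*x/b" using abc x by simp
  have "F' t + G' t * sqrt(c*x/b) + x*K' t + a*x^2*(G t * (- sqrt(c*x/b)/(4*x^2)) - A/x)
     + b*x^3*(G t * (- sqrt(c*x/b)/(4*x^2)) - A/x)^2 + c*x*(G t * (sqrt(c*x/b)/(2*x)) + (K t - A*ln x - A))
     - c*u t x
     = (F' t + c*(G t)^2/16 - c*F t) + sqrt(c*x/b)*(G' t - a*G t/4 + b*A*G t/2 - c*G t/2)
       + x*(K' t - a*A + b*A^2 - c*A)"
    unfolding u[OF x, of t] using x abc s by (simp add: field_simps power2_eq_square power3_eq_cube)
  also have "\<dots> = 0" using e1[OF t] e2[OF t] e3[OF t] by simp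
  finally show "F' t + G' t * sqrt(c*x/b) + x*K' t + a*x^2*(G t * (- sqrt(c*x/b)/(4*x^2)) - A/x)
     + b*x^3*(G t * (- sqrt(c*x/b)/(4*x^2)) - A/x)^2 + c*x*(G t * (sqrt(c*x/b)/(2*x)) + (K t - A*ln x - A))
     - c*u t x = 0" .
qed

lemma c1: assumes "a>0" "b>0" "c>0"
  shows "solves_eq a b c (\<lambda>t x. c1 * exp (c * t) + a / (2 * b) * x * (c2 + (a + 2 * c) / 2 * t - ln x))"
proof (rule gen[where F="\<lambda>t. c1 * exp (c*t)" and G="\<lambda>t. 0" and A="a/(2*b)"
   and K="\<lambda>t. a/(2*b)*(c2 + (a + 2 * c) / 2 * t)" and F'="\<lambda>t. c1*c*exp(c*t)" and G'="\<lambda>t. 0"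
   and K'="\<lambda>t. a/(2*b)*((a + 2 * c) / 2)"])
  show "\<And>t. ((\<lambda>t. c1 * exp (c*t)) has_real_derivative c1*c*exp(c*t)) (at t)"
    by (auto intro!: derivative_eq_intros)
  show "\<And>t. ((\<lambda>t. a/(2*b)*(c2 + (a + 2 * c) / 2 * t)) has_real_derivative a/(2*b)*((a + 2 * c) / 2)) (at t)"
    using assms by (auto intro!: derivative_eq_intros simp: field_simps)
qed (use assms in \<open>auto simp: field_simps power2_eq_square\<close>; (use assms in \<open>simp add: field_simps\<close>)?)+

lemma exp_half_sq: "exp ((c::real)/2*t)^2 = exp (c*t)"
  by (simp add: power2_eq_square exp_add[symmetric])

lemma c2: assumes "a>0" "b>0" "c>0" "\<delta> \<in> {1,-1}"
  shows "solves_eq a b c (\<lambda>t x. (c1 - c * t) * exp (c * t) + 4 * \<delta> * exp (c / 2 * t) * sqrt (c * x / b)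
        + a / (2 * b) * x * (c2 + (a + 2 * c) / 2 * t - ln x))"
proof (rule gen[where F="\<lambda>t. (c1 - c * t) * exp (c*t)" and G="\<lambda>t. 4 * \<delta> * exp (c / 2 * t)" and A="a/(2*b)"
   and K="\<lambda>t. a/(2*b)*(c2 + (a + 2 * c) / 2 * t)" and F'="\<lambda>t. - c*exp(c*t) + (c1 - c*t)*c*exp(c*t)"
   and G'="\<lambda>t. 4 * \<delta> * (c/2) * exp (c / 2 * t)"
   and K'="\<lambda>t. a/(2*b)*((a + 2 * c) / 2)"])
  show "\<And>t. ((\<lambda>t. (c1 - c * t) * exp (c*t)) has_real_derivative - c*exp(c*t) + (c1 - c*t)*c*exp(c*t)) (at t)"
    by (auto intro!: derivative_eq_intros simp: algebra_simps)
  show "\<And>t. ((\<lambda>t. 4 * \<delta> * exp (c / 2 * t)) has_real_derivative 4 * \<delta> * (c/2) * exp (c / 2 * t)) (at t)"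
    by (auto intro!: derivative_eq_intros simp: algebra_simps)
  show "\<And>t. ((\<lambda>t. a/(2*b)*(c2 + (a + 2 * c) / 2 * t)) has_real_derivative a/(2*b)*((a + 2 * c) / 2)) (at t)"
    using assms by (auto intro!: derivative_eq_intros simp: field_simps)
  have d: "\<delta>^2 = 1" using assms(4) by auto
  show "\<And>t. - c*exp(c*t) + (c1 - c*t)*c*exp(c*t) + c*(4 * \<delta> * exp (c / 2 * t))^2/16 - c*((c1 - c * t) * exp (c*t)) = 0"
    by (simp only: power_mult_distrib d exp_half_sq) (simp add: algebra_simps)
qed (use assms in \<open>auto simp: field_simps power2_eq_square\<close>; (use assms in \<open>simp add: field_simps\<close>)?)+

lemma c3: assumes "a>0" "b>0" "c>0" "\<epsilon> \<in> {1,-1}"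
  shows "solves_eq a b c (\<lambda>t x. c1 * exp (c * t)
        + (a + 2 * \<epsilon> * c) / (2 * b) * x * (c2 + (a + 2 * (1 - \<epsilon>) * c) / 2 * t - ln x))"
proof (rule gen[where F="\<lambda>t. c1 * exp (c*t)" and G="\<lambda>t. 0" and A="(a + 2 * \<epsilon> * c) / (2 * b)"
   and K="\<lambda>t. (a + 2 * \<epsilon> * c) / (2 * b)*(c2 + (a + 2 * (1 - \<epsilon>) * c) / 2 * t)" and F'="\<lambda>t. c1*c*exp(c*t)" and G'="\<lambda>t. 0"
   and K'="\<lambda>t. (a + 2 * \<epsilon> * c) / (2 * b)*((a + 2 * (1 - \<epsilon>) * c) / 2)"])
  show "\<And>t. ((\<lambda>t. c1 * exp (c*t)) has_real_derivative c1*c*exp(c*t)) (at t)"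
    by (auto intro!: derivative_eq_intros)
  show "\<And>t. ((\<lambda>t. (a + 2 * \<epsilon> * c) / (2 * b)*(c2 + (a + 2 * (1 - \<epsilon>) * c) / 2 * t)) has_real_derivative (a + 2 * \<epsilon> * c) / (2 * b)*((a + 2 * (1 - \<epsilon>) * c) / 2)) (at t)"
    using assms by (auto intro!: derivative_eq_intros simp: field_simps)
  show "\<And>t. (a + 2 * \<epsilon> * c) / (2 * b)*((a + 2 * (1 - \<epsilon>) * c) / 2) - a*((a + 2 * \<epsilon> * c) / (2 * b)) + b*((a + 2 * \<epsilon> * c) / (2 * b))^2 - c*((a + 2 * \<epsilon> * c) / (2 * b)) = 0"
    using assms by (auto simp: field_simps power2_eq_square)
qed (use assms in \<open>auto simp: field_simps power2_eq_square\<close>; (use assms in \<open>simp add: field_simps\<close>)?)+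

lemma c4: assumes "a>0" "b>0" "c>0" "\<epsilon> \<in> {1,-1}" "\<delta> \<in> {1,-1}"
  shows "solves_eq a b c (\<lambda>t x. \<epsilon> * c1^2 * exp ((1 - \<epsilon>) * c * t)
        + 4 * \<delta> * c1 * exp (c / 2 * (1 - \<epsilon>) * t) * sqrt (c * x / b)
        + (a + 2 * \<epsilon> * c) / (2 * b) * x * (c2 + (a + 2 * (1 - \<epsilon>) * c) / 2 * t - ln x))"
proof (rule gen[where F="\<lambda>t. \<epsilon> * c1^2 * exp ((1 - \<epsilon>) * c * t)" and G="\<lambda>t. 4 * \<delta> * c1 * exp (c / 2 * (1 - \<epsilon>) * t)" and A="(a + 2 * \<epsilon> * c) / (2 * b)"
   and K="\<lambda>t. (a + 2 * \<epsilon> * c) / (2 * b)*(c2 + (a + 2 * (1 - \<epsilon>) * c) / 2 * t)"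
   and F'="\<lambda>t. \<epsilon> * c1^2 * ((1 - \<epsilon>) * c) * exp ((1 - \<epsilon>) * c * t)"
   and G'="\<lambda>t. 4 * \<delta> * c1 * (c / 2 * (1 - \<epsilon>)) * exp (c / 2 * (1 - \<epsilon>) * t)"
   and K'="\<lambda>t. (a + 2 * \<epsilon> * c) / (2 * b)*((a + 2 * (1 - \<epsilon>) * c) / 2)"])
  show "\<And>t. ((\<lambda>t. \<epsilon> * c1^2 * exp ((1 - \<epsilon>) * c * t)) has_real_derivative \<epsilon> * c1^2 * ((1 - \<epsilon>) * c) * exp ((1 - \<epsilon>) * c * t)) (at t)"
    by (auto intro!: derivative_eq_intros)
  show "\<And>t. ((\<lambda>t. 4 * \<delta> * c1 * exp (c / 2 * (1 - \<epsilon>) * t)) has_real_derivative 4 * \<delta> * c1 * (c / 2 * (1 - \<epsilon>)) * exp (c / 2 * (1 - \<epsilon>) * t)) (at t)"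
    by (auto intro!: derivative_eq_intros)
  show "\<And>t. ((\<lambda>t. (a + 2 * \<epsilon> * c) / (2 * b)*(c2 + (a + 2 * (1 - \<epsilon>) * c) / 2 * t)) has_real_derivative (a + 2 * \<epsilon> * c) / (2 * b)*((a + 2 * (1 - \<epsilon>) * c) / 2)) (at t)"
    using assms by (auto intro!: derivative_eq_intros simp: field_simps)
  have d: "\<delta>^2 = 1" using assms(5) by auto
  have ee: "\<epsilon> * (1 - \<epsilon>) + 1 - \<epsilon> = 0" using assms(4) by auto
  show "\<And>t. \<epsilon> * c1^2 * ((1 - \<epsilon>) * c) * exp ((1 - \<epsilon>) * c * t) + c*(4 * \<delta> * c1 * exp (c / 2 * (1 - \<epsilon>) * t))^2/16 - c*(\<epsilon> * c1^2 * exp ((1 - \<epsilon>) * c * t)) = 0"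
  proof -
    fix t
    have E: "exp (c / 2 * (1 - \<epsilon>) * t)^2 = exp ((1 - \<epsilon>) * c * t)"
      by (simp add: power2_eq_square exp_add[symmetric] algebra_simps)
    have "\<epsilon> * c1^2 * ((1 - \<epsilon>) * c) * exp ((1 - \<epsilon>) * c * t) + c*(4 * \<delta> * c1 * exp (c / 2 * (1 - \<epsilon>) * t))^2/16 - c*(\<epsilon> * c1^2 * exp ((1 - \<epsilon>) * c * t))
      = c * c1^2 * exp ((1 - \<epsilon>) * c * t) * (\<epsilon> * (1 - \<epsilon>) + 1 - \<epsilon>)"
      by (simp only: power_mult_distrib d E) (simp add: algebra_simps)
    then show "\<epsilon> * c1^2 * ((1 - \<epsilon>) * c) * exp ((1 - \<epsilon>) * c * t) + c*(4 * \<delta> * c1 * exp (c / 2 * (1 - \<epsilon>) * t))^2/16 - c*(\<epsilon> * c1^2 * exp ((1 - \<epsilon>) * c * t)) = 0"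
      using ee by simp
  qed
qed (use assms in \<open>auto simp: field_simps power2_eq_square\<close>; (use assms in \<open>simp add: field_simps\<close>)?)+

lemma c5: assumes "a>0" "b>0" "c>0" "k \<noteq> 0" and m: "m^2 + m/k + \<epsilon> = 0"
  shows "solves_eq a b c (\<lambda>t x. c * x / b *
        (c1 + (\<epsilon> * c + a / 2 * (1 + a / (2 * c))) * t - a / (2 * c) * ln x
         + m * ((1 / k - 1) * c * t + ln x)))"
proof (rule gen[where F="\<lambda>t. 0" and G="\<lambda>t. 0" and A="-(c/b)*(m - a/(2*c))"
   and K="\<lambda>t. c/b*(c1 + (\<epsilon> * c + a / 2 * (1 + a / (2 * c))) * t + m * ((1 / k - 1) * c * t))"
   and F'="\<lambda>t. 0" and G'="\<lambda>t. 0"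
   and K'="\<lambda>t. c/b*((\<epsilon> * c + a / 2 * (1 + a / (2 * c))) + m * ((1 / k - 1) * c))"])
  show "\<And>t. ((\<lambda>t. c/b*(c1 + (\<epsilon> * c + a / 2 * (1 + a / (2 * c))) * t + m * ((1 / k - 1) * c * t))) has_real_derivative c/b*((\<epsilon> * c + a / 2 * (1 + a / (2 * c))) + m * ((1 / k - 1) * c))) (at t)"
    using assms by (auto intro!: derivative_eq_intros simp: field_simps)
  show "\<And>t. c/b*((\<epsilon> * c + a / 2 * (1 + a / (2 * c))) + m * ((1 / k - 1) * c)) - a*(-(c/b)*(m - a/(2*c))) + b*(-(c/b)*(m - a/(2*c)))^2 - c*(-(c/b)*(m - a/(2*c))) = 0"
  proof -
    fix t
    have "c/b*((\<epsilon> * c + a / 2 * (1 + a / (2 * c))) + m * ((1 / k - 1) * c)) - a*(-(c/b)*(m - a/(2*c))) + b*(-(c/b)*(m - a/(2*c)))^2 - c*(-(c/b)*(m - a/(2*c)))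
        = c^2/b * (m^2 + m/k + \<epsilon>)"
      using assms(1-4) by (simp add: field_simps power2_eq_square)
    then show "c/b*((\<epsilon> * c + a / 2 * (1 + a / (2 * c))) + m * ((1 / k - 1) * c)) - a*(-(c/b)*(m - a/(2*c))) + b*(-(c/b)*(m - a/(2*c)))^2 - c*(-(c/b)*(m - a/(2*c))) = 0"
      using m by simp
  qed
qed (use assms in \<open>auto simp: field_simps power2_eq_square\<close>)

lemma mkey: assumes "k \<noteq> 0" "\<delta> \<in> {1,-1}" "1 - 4*\<epsilon>*k^2 \<ge> 0"
  shows "(1 / (2 * k) * (\<delta> * sqrt (1 - 4 * \<epsilon> * k^2) - 1))^2 + (1 / (2 * k) * (\<delta> * sqrt (1 - 4 * \<epsilon> * k^2) - 1))/k + \<epsilon> = 0"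
proof -
  have r: "sqrt (1 - 4 * \<epsilon> * k^2)^2 = 1 - 4 * \<epsilon> * k^2" using assms(3) by simp
  have d: "\<delta>^2 = 1" using assms(2) by auto
  have "(1 / (2 * k) * (\<delta> * sqrt (1 - 4 * \<epsilon> * k^2) - 1))^2 + (1 / (2 * k) * (\<delta> * sqrt (1 - 4 * \<epsilon> * k^2) - 1))/k + \<epsilon>
     = (\<delta>^2 * sqrt (1 - 4 * \<epsilon> * k^2)^2 - 1 + 4*\<epsilon>*k^2)/(4*k^2)"
    using assms(1) by (simp add: field_simps power2_eq_square)
  also have "\<dots> = 0" unfolding r d by simp
  finally show ?thesis .
qed


theorem mainTheorem6:
  fixes a b c c1 c2 \<epsilon> \<delta> k :: real
  assumes "a > 0" and "b > 0" and "c > 0"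
    and "\<epsilon> \<in> {1, -1}" and "\<delta> \<in> {1, -1}"
  shows
   "solves_eq a b c (\<lambda>t x. c1 * exp (c * t) + a / (2 * b) * x * (c2 + (a + 2 * c) / 2 * t - ln x))
  \<and> solves_eq a b c (\<lambda>t x. (c1 - c * t) * exp (c * t) + 4 * \<delta> * exp (c / 2 * t) * sqrt (c * x / b)
        + a / (2 * b) * x * (c2 + (a + 2 * c) / 2 * t - ln x))
  \<and> solves_eq a b c (\<lambda>t x. c1 * exp (c * t)
        + (a + 2 * \<epsilon> * c) / (2 * b) * x * (c2 + (a + 2 * (1 - \<epsilon>) * c) / 2 * t - ln x))
  \<and> solves_eq a b c (\<lambda>t x. \<epsilon> * c1^2 * exp ((1 - \<epsilon>) * c * t)
        + 4 * \<delta> * c1 * exp (c / 2 * (1 - \<epsilon>) * t) * sqrt (c * x / b)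
        + (a + 2 * \<epsilon> * c) / (2 * b) * x * (c2 + (a + 2 * (1 - \<epsilon>) * c) / 2 * t - ln x))
  \<and> ((\<epsilon> = -1 \<and> k \<noteq> 0) \<or> (\<epsilon> = 1 \<and> 0 < \<bar>k\<bar> \<and> \<bar>k\<bar> \<le> 1/2) \<longrightarrow>
      solves_eq a b c (\<lambda>t x. c * x / b *
        (c1 + (\<epsilon> * c + a / 2 * (1 + a / (2 * c))) * t - a / (2 * c) * ln x
         + 1 / (2 * k) * (\<delta> * sqrt (1 - 4 * \<epsilon> * k^2) - 1) * ((1 / k - 1) * c * t + ln x))))"
proof -
  have k: "((\<epsilon> = -1 \<and> k \<noteq> 0) \<or> (\<epsilon> = 1 \<and> 0 < \<bar>k\<bar> \<and> \<bar>k\<bar> \<le> 1/2) \<longrightarrow>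
      solves_eq a b c (\<lambda>t x. c * x / b *
        (c1 + (\<epsilon> * c + a / 2 * (1 + a / (2 * c))) * t - a / (2 * c) * ln x
         + 1 / (2 * k) * (\<delta> * sqrt (1 - 4 * \<epsilon> * k^2) - 1) * ((1 / k - 1) * c * t + ln x))))"
  proof
    assume h: "(\<epsilon> = -1 \<and> k \<noteq> 0) \<or> (\<epsilon> = 1 \<and> 0 < \<bar>k\<bar> \<and> \<bar>k\<bar> \<le> 1/2)"
    then have k0: "k \<noteq> 0" by auto
    have "1 - 4*\<epsilon>*k^2 \<ge> 0"
    proof (cases "\<epsilon> = 1")
      case True
      then have "\<bar>k\<bar> \<le> 1/2" using h by auto
      then have "\<bar>k\<bar>^2 \<le> (1/2)^2" by (intro power_mono) auto
      then show ?thesis using True by (simp add: power_divide)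
    next
      case False
      then show ?thesis using h by simp
    qed
    from c5[OF assms(1-3) k0 mkey[OF k0 assms(5) this], of c1]
    show "solves_eq a b c (\<lambda>t x. c * x / b *
        (c1 + (\<epsilon> * c + a / 2 * (1 + a / (2 * c))) * t - a / (2 * c) * ln x
         + 1 / (2 * k) * (\<delta> * sqrt (1 - 4 * \<epsilon> * k^2) - 1) * ((1 / k - 1) * c * t + ln x)))" .
  qed
  show ?thesis using c1[OF assms(1-3)] c2[OF assms(1-3) assms(5)] c3[OF assms(1-3) assms(4)]
    c4[OF assms(1-3) assms(4) assms(5)] k by blast
qed



end
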